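(* For every word $\omega\in[n]^*$ and every $j\in[n]$: (1) $a^j_\omega-e_j\in B_\omega$; (2) $M_\omega a^j_\omega=u_\omega+e_j\in e_j+M_\omega B_\omega$; (3) $a^j_\omega\in\delta^j_\omega+B_\omega$.
   Context: Let $[n]=\{1,\dots,n\}$, $e_1,\dots,e_n$ the standard basis of $\mathbb{Z}^n$; $\varepsilon$ is the empty word, $*$ concatenation. For words $\omega$ over $[n]$ define recursively $a^i_\omega,\delta^i_\omega\in\mathbb{Z}^n$: $a^i_\varepsilon=\delta^i_\varepsilon=e_i$; $a^i_{\omega*j}=a^i_\omega$ if $i\ne j$, $a^j_{\omega*j}=a^j_\omega+\delta^j_\omega$; $\delta^j_{\omega*j}=\delta^j_\omega$, $\delta^i_{\omega*j}=\delta^i_\omega-\delta^j_\omega$ for $i\ne j$. Let $B_\varepsilon=\{0\}$, $B_{\omega*j}=B_\omega+\{0,\delta^j_\omega\}$ (Minkowski sum). Let $M_\omega=(\delta^1_\omega\ \cdots\ \delta^n_\omega)^{-1}$ (inverse of the matrix with columns $\delta^i_\omega$). For $k\in[n]$ let $D^k=\mathrm{id}+e_k(\mathbb{1}-e_k)^T$ with $\mathbb{1}=(1,\dots,1)^T$. Define $u_\varepsilon=0$, $u_{\omega*j}=e_j+D^j u_\omega$. *)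

theory Defs
  imports "HOL-Analysis.Analysis"
begin

text \<open>Words over [n] are lists over a finite type 'n (the index set [n]);
  the word omega*j is omega @ [j].  The auxiliary functions below take the
  REVERSED word, so that the last letter is the head of the list.\<close>

definition ev :: "'n::finite \<Rightarrow> int^'n" where
  "ev i = axis i 1"

fun deltaR :: "'n::finite list \<Rightarrow> 'n \<Rightarrow> int^'n" where
  "deltaR [] i = ev i"
| "deltaR (j # w) i = (if i = j then deltaR w j else deltaR w i - deltaR w j)"

fun aR :: "'n::finite list \<Rightarrow> 'n \<Rightarrow> int^'n" where
  "aR [] i = ev i"
| "aR (j # w) i = (if i = j then aR w j + deltaR w j else aR w i)"

fun BR :: "'n::finite list \<Rightarrow> (int^'n) set" where
  "BR [] = {0}"
| "BR (j # w) = {b + c | b c. b \<in> BR w \<and> c \<in> {0, deltaR w j}}"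

definition Dmat :: "'n::finite \<Rightarrow> int^'n^'n" where
  "Dmat k = mat 1 + (\<chi> r c. (ev k $ r) * ((vec 1 - ev k) $ c))"

fun uR :: "'n::finite list \<Rightarrow> int^'n" where
  "uR [] = 0"
| "uR (j # w) = ev j + Dmat j *v uR w"

definition delta :: "'n::finite list \<Rightarrow> 'n \<Rightarrow> int^'n" where
  "delta w i = deltaR (rev w) i"

definition avec :: "'n::finite list \<Rightarrow> 'n \<Rightarrow> int^'n" where
  "avec w i = aR (rev w) i"

definition Bset :: "'n::finite list \<Rightarrow> (int^'n) set" where
  "Bset w = BR (rev w)"

definition uvec :: "'n::finite list \<Rightarrow> int^'n" where
  "uvec w = uR (rev w)"

definition Mmat :: "'n::finite list \<Rightarrow> real^'n^'n" where
  "Mmat w = matrix_inv (\<chi> r c. real_of_int (delta w c $ r))"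

definition rv :: "int^'n \<Rightarrow> real^'n" where
  "rv x = (\<chi> i. real_of_int (x $ i))"

end

theory Submission
  imports Defs
begin

definition linG :: "('n::finite \<Rightarrow> 'a::comm_ring_1^'n) \<Rightarrow> 'a^'n \<Rightarrow> 'a^'n" where
  "linG d x = (\<Sum>c\<in>UNIV. x$c *s d c)"

lemma linG_step:
  fixes d d' :: "'n::finite \<Rightarrow> 'a::comm_ring_1^'n"
  assumes "d' k = d k" "\<And>c. c \<noteq> k \<Longrightarrow> d' c = d c - d k"
  shows "linG d' x = linG d x - (\<Sum>c\<in>-{k}. x$c) *s d k"
proof -
  have "linG d' x = x$k *s d k + (\<Sum>c\<in>-{k}. x$c *s (d c - d k))"
    unfolding linG_def
    by (subst sum.remove[of UNIV k]) (auto simp: assms Compl_eq_Diff_UNIV intro!: sum.cong)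
  also have "\<dots> = x$k *s d k + (\<Sum>c\<in>-{k}. x$c *s d c) - (\<Sum>c\<in>-{k}. x$c) *s d k"
    by (simp add: vector_ssub_ldistrib sum_subtractf scaleR_sum_left vec_eq_iff sum_distrib_right sum_distrib_left algebra_simps)
  also have "x$k *s d k + (\<Sum>c\<in>-{k}. x$c *s d c) = linG d x"
    unfolding linG_def Compl_eq_Diff_UNIV
    by (rule sum.remove[symmetric]) auto
  finally show ?thesis .
qed

lemma linG_add: "linG d (x + y) = linG d x + linG d y"
  unfolding linG_def by (simp add: vector_sadd_rdistrib sum.distrib)

lemma linG_ev: "linG d (ev i) = d i"
  unfolding linG_def ev_def
  by (subst sum.remove[of UNIV i]) (auto simp: axis_def)

lemma deltaR_step: "deltaR (k#r) k = deltaR r k"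
  "c \<noteq> k \<Longrightarrow> deltaR (k#r) c = deltaR r c - deltaR r k" by auto

lemma Dmat_apply:
  "Dmat k *v u = u + (\<Sum>c\<in>-{k}. u$c) *s ev k"
proof -
  have s: "(\<Sum>c\<in>UNIV. (vec 1 - ev k) $ c * u $ c) = (\<Sum>c\<in>-{k}. u$c)"
    unfolding ev_def
    by (subst sum.remove[of UNIV k]) (auto simp: axis_def Compl_eq_Diff_UNIV intro!: sum.cong)
  show ?thesis
    unfolding vec_eq_iff
  proof
    fix r
    have "(Dmat k *v u) $ r = (\<Sum>c\<in>UNIV. (mat 1 $ r $ c) * u $ c)
         + ev k $ r * (\<Sum>c\<in>UNIV. (vec 1 - ev k) $ c * u $ c)"
      unfolding Dmat_def matrix_vector_mult_def
      by (simp add: algebra_simps sum_distrib_left sum_subtractf sum.distrib)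
    also have "(\<Sum>c\<in>UNIV. (mat 1 $ r $ c) * u $ c) = u $ r"
      using matrix_vector_mul_lid[of u] unfolding matrix_vector_mult_def vec_eq_iff by simp
    finally show "(Dmat k *v u) $ r = (u + (\<Sum>c\<in>-{k}. u$c) *s ev k) $ r"
      using s by (simp add: mult.commute)
  qed
qed

lemma ev_nth: "ev k $ c = (if c = k then 1 else 0)"
  unfolding ev_def axis_def by simp

lemma sum_ev_smult: "(\<Sum>c\<in>-{k}. (a *s ev k) $ c) = 0" "(\<Sum>c\<in>-{k}. a * ev k $ c) = 0"
  by (rule sum.neutral; auto simp: ev_nth)+

lemma BR_intro: "b \<in> BR r \<Longrightarrow> c \<in> {0, deltaR r k} \<Longrightarrow> x = b + c \<Longrightarrow> x \<in> BR (k#r)"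
  by auto

abbreviation lin where "lin r \<equiv> linG (deltaR r)"

lemma lin_step: "lin (k#r) x = lin r x - (\<Sum>c\<in>-{k}. x$c) *s deltaR r k"
  by (rule linG_step) auto

lemma sum_ev: "(\<Sum>c\<in>-{k}. ev i $ c) = (if i = k then 0 else (1::int))"
  unfolding ev_def
  by (cases "i = k") (auto simp: axis_def sum.If_cases Compl_eq_Diff_UNIV)

lemma linG_smult: "linG d (a *s x) = a *s linG d x"
  unfolding linG_def by (simp add: scalar_mult_eq_scaleR vec_eq_iff sum_distrib_left algebra_simps)

lemma aR_lin: "aR r i = lin r (uR r + ev i)"
proof (induction r arbitrary: i)
  case Nil
  then show ?case by (simp add: linG_ev)
next
  case (Cons k r)
  have D: "Dmat k *v uR r = uR r + (\<Sum>c\<in>-{k}. uR r $c) *s ev k" by (rule Dmat_apply)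
  let ?S = "\<Sum>c\<in>-{k}. uR r $c"
  have sk: "(\<Sum>c\<in>-{k}. (ev k + Dmat k *v uR r + ev i) $ c) = ?S + (if i = k then 0 else 1)"
    unfolding D by (simp add: sum.distrib sum_ev_smult sum_ev)
  have "lin (k#r) (uR (k#r) + ev i) = lin r (ev k + Dmat k *v uR r + ev i)
      - (?S + (if i = k then 0 else 1)) *s deltaR r k"
    unfolding uR.simps by (subst lin_step, subst sk, rule refl)
  also have "\<dots> = deltaR r k + lin r (uR r) + ?S *s deltaR r k + deltaR r i
      - (?S + (if i = k then 0 else 1)) *s deltaR r k"
    unfolding D by (simp add: linG_add linG_ev linG_smult)
  also have "\<dots> = aR (k#r) i"
    using Cons.IH[of i] Cons.IH[of k]
    by (cases "i = k") (auto simp: linG_add linG_ev algebra_simps vector_sadd_rdistrib)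
  finally show ?case by (simp only: uR.simps)
qed

lemma aR_B1: "aR r i - ev i \<in> BR r"
proof (induction r arbitrary: i)
  case (Cons k r)
  show ?case
  proof (cases "i = k")
    case True
    then show ?thesis using Cons.IH[of k]
      by (intro BR_intro[of "aR r k - ev k" _ "deltaR r k"]) auto
  next
    case False
    then show ?thesis using Cons.IH[of i]
      by (intro BR_intro[of "aR r i - ev i" _ 0]) auto
  qed
qed simp

lemma aR_B3: "aR r i - deltaR r i \<in> BR r"
proof (induction r arbitrary: i)
  case (Cons k r)
  show ?case
  proof (cases "i = k")
    case True
    then show ?thesis using Cons.IH[of k]
      by (intro BR_intro[of "aR r k - deltaR r k" _ "deltaR r k"]) auto
  next
    case False
    then show ?thesis using Cons.IH[of i]
      by (intro BR_intro[of "aR r i - deltaR r i" _ "deltaR r k"]) auto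
  qed
qed simp

lemma uR_B: "lin r (uR r) \<in> BR r"
proof (induction r)
  case Nil
  then show ?case by (simp add: linG_def)
next
  case (Cons k r)
  let ?S = "\<Sum>c\<in>-{k}. uR r $c"
  have D: "Dmat k *v uR r = uR r + ?S *s ev k" by (rule Dmat_apply)
  have sk: "(\<Sum>c\<in>-{k}. (ev k + Dmat k *v uR r) $ c) = ?S"
    using sum_ev[of k k] unfolding D by (simp add: sum.distrib sum_ev_smult)
  have "lin (k#r) (uR (k#r)) = lin r (ev k + Dmat k *v uR r) - ?S *s deltaR r k"
    unfolding uR.simps by (subst lin_step, subst sk, rule refl)
  also have "\<dots> = lin r (uR r) + deltaR r k"
    unfolding D by (simp add: linG_add linG_ev linG_smult)
  finally have e: "lin (k#r) (uR (k#r)) = lin r (uR r) + deltaR r k" .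
  show ?case by (rule BR_intro[OF Cons.IH _ e]) simp
qed

definition DR :: "'n::finite list \<Rightarrow> real^'n^'n" where
  "DR r = (\<chi> a c. real_of_int (deltaR r c $ a))"

lemma DR_lin: "DR r *v y = linG (\<lambda>c. rv (deltaR r c)) y"
  unfolding DR_def linG_def rv_def matrix_vector_mult_def
  by (simp add: vec_eq_iff sum_component mult.commute)

lemma rv_lin: "rv (lin r x) = DR r *v rv x"
  unfolding DR_def linG_def rv_def matrix_vector_mult_def
  by (simp add: vec_eq_iff sum_component mult.commute)

lemma rv_diff: "rv (a - b) = rv a - rv b"
  unfolding rv_def by (simp add: vec_eq_iff)

lemma rv_add: "rv (a + b) = rv a + rv b"
  unfolding rv_def by (simp add: vec_eq_iff)

lemma linG_axis: "linG d (axis i 1) = d i"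
  unfolding linG_def
  by (subst sum.remove[of UNIV i]) (auto simp: axis_def)

lemma linG_smult': "linG d (a *s x) = a *s linG d x"
  unfolding linG_def by (simp add: vec_eq_iff sum_distrib_left algebra_simps sum_component)

lemma linG_diff: "linG d (x - y) = linG d x - linG d y"
  unfolding linG_def by (simp add: vector_sub_rdistrib sum_subtractf)

lemma linG_id: "linG (\<lambda>c. axis c 1) (y::'a::comm_ring_1^'n::finite) = y"
  unfolding linG_def
proof (simp add: vec_eq_iff sum_component axis_def, intro allI)
  fix i
  have "(\<Sum>x\<in>UNIV. y $ x * (if i = x then 1 else 0)) = (\<Sum>x\<in>UNIV. if x = i then y $ x else 0)"
    by (rule sum.cong) auto
  then show "(\<Sum>x\<in>UNIV. y $ x * (if i = x then 1 else 0)) = y $ i" by simp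
qed

lemma rv_ev: "rv (ev c) = axis c 1"
  by (simp add: rv_def ev_def axis_def vec_eq_iff)

lemma DR_inj: "DR r *v y = 0 \<Longrightarrow> y = 0"
proof (induction r arbitrary: y)
  case Nil
  have "DR [] *v y = y" unfolding DR_lin
    by (simp only: deltaR.simps rv_ev linG_id)
  then show ?case using Nil by simp
next
  case (Cons k r)
  let ?S = "\<Sum>c\<in>-{k}. y$c"
  have "DR (k#r) *v y = linG (\<lambda>c. rv (deltaR r c)) y - ?S *s rv (deltaR r k)"
    unfolding DR_lin by (rule linG_step) (auto simp: rv_diff)
  also have "\<dots> = DR r *v (y - ?S *s axis k 1)"
    unfolding DR_lin linG_diff linG_smult' linG_axis ..
  finally have eq: "DR (k#r) *v y = DR r *v (y - ?S *s axis k 1)" .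
  have "DR r *v (y - ?S *s axis k 1) = 0" using Cons.prems unfolding eq .
  then have y0: "y - ?S *s axis k 1 = 0" by (rule Cons.IH)
  then have y: "\<And>c. y $ c = ?S * axis k 1 $ c"
    by (metis eq_iff_diff_eq_0 vector_smult_component)
  have "y $ c = 0" if "c \<in> -{k}" for c
  proof -
    have "y $ c = ?S * axis k 1 $ c" by (rule y)
    also have "\<dots> = 0" using that by (simp add: axis_def)
    finally show ?thesis .
  qed
  then have "?S = 0" by (intro sum.neutral) blast
  then show ?case using y0 by simp
qed

lemma DR_inv: "matrix_inv (DR r) ** DR r = mat 1"
proof -
  have "invertible (DR r)"
    unfolding invertible_left_inverse matrix_left_invertible_ker using DR_inj by blast
  then show ?thesis unfolding invertible_def matrix_inv_def
    by (rule someI2_ex) auto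
qed

lemma DR_cancel: "matrix_inv (DR r) *v (DR r *v z) = z"
  by (simp add: matrix_vector_mul_assoc DR_inv)

theorem mainTheorem8:
  fixes w :: "'n::finite list" and j :: 'n
  shows "avec w j - ev j \<in> Bset w
       \<and> Mmat w *v rv (avec w j) = rv (uvec w + ev j)
       \<and> rv (uvec w + ev j) \<in> {rv (ev j) + Mmat w *v rv b | b. b \<in> Bset w}
       \<and> avec w j \<in> {delta w j + b | b. b \<in> Bset w}"
proof -
  let ?r = "rev w"
  have M: "Mmat w = matrix_inv (DR ?r)"
    unfolding Mmat_def DR_def delta_def ..
  have A: "avec w j = aR ?r j" "Bset w = BR ?r" "delta w j = deltaR ?r j" "uvec w = uR ?r"
    by (simp_all add: avec_def Bset_def delta_def uvec_def)
  have p1: "avec w j - ev j \<in> Bset w" using aR_B1 A by simp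
  have p2: "Mmat w *v rv (avec w j) = rv (uvec w + ev j)"
    unfolding M A aR_lin rv_lin DR_cancel ..
  have "rv (uvec w + ev j) = rv (ev j) + Mmat w *v rv (lin ?r (uR ?r))"
    unfolding M A rv_lin DR_cancel rv_add by simp
  then have p3: "rv (uvec w + ev j) \<in> {rv (ev j) + Mmat w *v rv b | b. b \<in> Bset w}"
    using uR_B[of ?r] A by blast
  have "avec w j = delta w j + (aR ?r j - deltaR ?r j)" using A by simp
  then have p4: "avec w j \<in> {delta w j + b | b. b \<in> Bset w}"
    using aR_B3[of ?r j] A by blast
  show ?thesis using p1 p2 p3 p4 by blast
qed

end
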